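(* Let $A$ be a real $k\times n$ matrix and let $W$ be a nonnegative diagonal $n\times n$ matrix with trace $1$. Then there exists a $k$-element set $J\subseteq[n]$ such that \[ |\det A_J|^{1/k}\ge\sqrt{k/e}\cdot|\det AWA^T|^{1/(2k)} . \]
   Context: $[n]=\{1,\dots,n\}$; $A_J$ denotes the $k\times k$ submatrix of $A$ consisting of the columns indexed by $J$. *)

theory Defs
  imports Complex_Main "Jordan_Normal_Form.Determinant" "Jordan_Normal_Form.DL_Submatrix"
begin

end

theory Submission
  imports Defs
begin


lemma pick_atLeast0: "j < k \<Longrightarrow> pick {0..<k} j = j"
proof (induction j)
  case 0 then show ?case by (simp add: Least_eq_0)
next
  case (Suc j)
  then show ?case by (auto intro!: Least_equality)
qed

definition phi :: "nat \<Rightarrow> nat set \<Rightarrow> (nat \<Rightarrow> nat) \<Rightarrow> nat \<Rightarrow> nat" where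
  "phi k J \<pi> = restrict (\<lambda>i. pick J (\<pi> i)) {0..<k}"

definition psi :: "nat \<Rightarrow> (nat \<Rightarrow> nat) \<Rightarrow> nat set \<times> (nat \<Rightarrow> nat)" where
  "psi k f = (f ` {0..<k}, \<lambda>i. if i < k then card {a \<in> f ` {0..<k}. a < f i} else i)"

lemma rank_less:
  fixes J :: "nat set"
  assumes "finite J" "x \<in> J" "y \<in> J" "x < y"
  shows "card {a\<in>J. a < x} < card {a\<in>J. a < y}"
proof -
  have s: "{a\<in>J. a < x} \<subseteq> {a\<in>J. a < y}" using assms(4) by auto
  have "x \<in> {a\<in>J. a < y}" "x \<notin> {a\<in>J. a < x}" using assms(2,4) by auto
  then have "{a\<in>J. a < x} \<subset> {a\<in>J. a < y}" using s by blast
  moreover have "finite {a\<in>J. a < y}" using assms(1) by simp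
  ultimately show ?thesis by (simp add: psubset_card_mono)
qed

lemma pick_facts:
  assumes "finite J" "card J = k" "m < k"
  shows "pick J m \<in> J" "card {a\<in>J. a < pick J m} = m"
  using pick_in_set_le[of m J] card_pick_le[of m J] assms by auto

lemma pick_image:
  assumes "finite J" "card J = k"
  shows "pick J ` {0..<k} = J"
proof
  show "pick J ` {0..<k} \<subseteq> J" using pick_facts[OF assms] by auto
  show "J \<subseteq> pick J ` {0..<k}"
  proof
    fix x assume x: "x \<in> J"
    have "card {a\<in>J. a < x} < card J"
      by (rule psubset_card_mono) (use assms x in auto)
    then have "card {a\<in>J. a < x} \<in> {0..<k}" using assms by simp
    moreover have "x = pick J (card {a\<in>J. a < x})" using pick_card_in_set[OF x] by simp
    ultimately show "x \<in> pick J ` {0..<k}" by (rule rev_image_eqI)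
  qed
qed

lemma decomp:
  fixes G :: "(nat \<Rightarrow> nat) \<Rightarrow> 'a::comm_monoid_add"
  shows "(\<Sum>f\<in>{f\<in>Pi\<^sub>E {0..<k} (\<lambda>_. {0..<n}). inj_on f {0..<k}}. G f) =
    (\<Sum>J\<in>{J. J \<subseteq> {0..<n} \<and> card J = k}. \<Sum>\<pi>\<in>{\<pi>. \<pi> permutes {0..<k}}. G (phi k J \<pi>))"
proof -
  let ?S = "{J. J \<subseteq> {0..<n} \<and> card J = k}"
  let ?P = "{\<pi>. \<pi> permutes {0..<k}}"
  let ?T = "{f\<in>Pi\<^sub>E {0..<k} (\<lambda>_. {0..<n}). inj_on f {0..<k}}"
  have finS: "finite ?S" by (rule finite_subset[of _ "Pow {0..<n}"]) auto
  have finP: "finite ?P" by (simp add: finite_permutations)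
  have "(\<Sum>J\<in>?S. \<Sum>\<pi>\<in>?P. G (phi k J \<pi>)) = (\<Sum>(J,\<pi>)\<in>Sigma ?S (\<lambda>_. ?P). G (phi k J \<pi>))"
    by (rule sum.Sigma[OF finS]) (use finP in auto)
  also have "\<dots> = (\<Sum>f\<in>?T. G f)"
  proof (rule sum.reindex_bij_witness[where i = "psi k" and j = "\<lambda>(J,\<pi>). phi k J \<pi>"])
    fix a assume a: "a \<in> Sigma ?S (\<lambda>_. ?P)"
    then obtain J \<pi> where aa: "a = (J,\<pi>)" and J: "J \<subseteq> {0..<n}" "card J = k" and p: "\<pi> permutes {0..<k}" by auto
    have fJ: "finite J" using J finite_subset by blast
    have pk: "\<And>i. i < k \<Longrightarrow> \<pi> i < k" using p permutes_in_image by fastforce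
    have img: "phi k J \<pi> ` {0..<k} = J"
    proof -
      have "phi k J \<pi> ` {0..<k} = pick J ` (\<pi> ` {0..<k})" by (auto simp: phi_def)
      also have "\<pi> ` {0..<k} = {0..<k}" by (rule permutes_image[OF p])
      finally show ?thesis using pick_image[OF fJ J(2)] by simp
    qed
    show "psi k (case a of (J, \<pi>) \<Rightarrow> phi k J \<pi>) = a"
      unfolding aa psi_def using img
      apply (simp)
      apply (rule ext)
      subgoal for i
        using pick_facts(2)[OF fJ J(2) pk[of i]] p unfolding permutes_def
        by (auto simp: phi_def)
      done
    show "(case a of (J, \<pi>) \<Rightarrow> phi k J \<pi>) \<in> ?T"
    proof -
      have "phi k J \<pi> \<in> Pi\<^sub>E {0..<k} (\<lambda>_. {0..<n})"
        using pick_facts(1)[OF fJ J(2) pk] J(1) by (auto simp: phi_def)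
      moreover have "inj_on (phi k J \<pi>) {0..<k}"
      proof (rule inj_onI)
        fix x y assume x: "x \<in> {0..<k}" and y: "y \<in> {0..<k}" and e: "phi k J \<pi> x = phi k J \<pi> y"
        have "pick J (\<pi> x) = pick J (\<pi> y)" using e x y by (simp add: phi_def)
        have "\<pi> x = card {a\<in>J. a < pick J (\<pi> x)}" using pick_facts(2)[OF fJ J(2) pk[of x]] x by simp
        also have "\<dots> = \<pi> y" using pick_facts(2)[OF fJ J(2) pk[of y]] y \<open>pick J (\<pi> x) = pick J (\<pi> y)\<close> by simp
        finally have "\<pi> x = \<pi> y" .
        then show "x = y" using permutes_inj[OF p] by (simp add: inj_eq)
      qed
      ultimately show ?thesis using aa by auto
    qed
    show "G (case a of (J, \<pi>) \<Rightarrow> phi k J \<pi>) = (case a of (J, \<pi>) \<Rightarrow> G (phi k J \<pi>))"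
      using aa by simp
  next
    fix f assume f: "f \<in> ?T"
    let ?J = "f ` {0..<k}"
    let ?r = "\<lambda>i. if i < k then card {a \<in> ?J. a < f i} else i"
    have fin: "finite ?J" by simp
    have cJ: "card ?J = k" using f card_image[of f "{0..<k}"] by auto
    have rk: "\<And>i. i < k \<Longrightarrow> ?r i < k"
    proof -
      fix i assume i: "i < k"
      have "card {a \<in> ?J. a < f i} < card ?J"
        by (rule psubset_card_mono) (use i in auto)
      then show "?r i < k" using i cJ by simp
    qed
    have pick_r: "\<And>i. i < k \<Longrightarrow> pick ?J (?r i) = f i"
      using pick_card_in_set by simp
    show "(case psi k f of (J, \<pi>) \<Rightarrow> phi k J \<pi>) = f"
      unfolding psi_def phi_def using f pick_r
      by (auto simp: restrict_def PiE_def extensional_def)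
    show "psi k f \<in> Sigma ?S (\<lambda>_. ?P)"
    proof -
      have "?J \<subseteq> {0..<n}" using f by auto
      moreover have "?r permutes {0..<k}"
      proof (rule inj_on_nat_permutes)
        show "inj_on ?r {0..<k}"
        proof (rule inj_onI)
          fix x y assume x: "x \<in> {0..<k}" and y: "y \<in> {0..<k}" and e: "?r x = ?r y"
          then have "pick ?J (?r x) = pick ?J (?r y)" by simp
          then have "f x = f y" using pick_r x y by simp
          then show "x = y" using f x y by (auto dest: inj_onD)
        qed
        show "?r \<in> {0..<k} \<rightarrow> {0..<k}" using rk by auto
      qed auto
      ultimately show ?thesis unfolding psi_def using cJ by auto
    qed
  qed
  finally show ?thesis ..
qed



lemma entry_AWAt:
  fixes A W :: "real mat"
  assumes A: "A \<in> carrier_mat k n" and W: "W \<in> carrier_mat n n" and dW: "diagonal_mat W"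
    and i: "i < k" and j: "j < k"
  shows "(A * W * transpose_mat A) $$ (i,j) = (\<Sum>l\<in>{0..<n}. A$$(i,l) * W$$(l,l) * A$$(j,l))"
proof -
  have AW: "(A * W) $$ (i,l) = A$$(i,l) * W$$(l,l)" if l: "l < n" for l
  proof -
    have "(A * W) $$ (i,l) = (\<Sum>m\<in>{0..<n}. A$$(i,m) * W$$(m,l))"
      using A W i l by (simp add: scalar_prod_def)
    also have "\<dots> = (\<Sum>m\<in>{0..<n}. if m = l then A$$(i,l) * W$$(l,l) else 0)"
      by (rule sum.cong) (use dW W l in \<open>auto simp: diagonal_mat_def\<close>)
    also have "\<dots> = A$$(i,l) * W$$(l,l)" using l by simp
    finally show ?thesis .
  qed
  have AWc: "A * W \<in> carrier_mat k n" using A W by simp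
  have "(A * W * transpose_mat A) $$ (i,j) = row (A * W) i \<bullet> col (transpose_mat A) j"
    by (rule index_mult_mat(1)) (use AWc A i j in auto)
  also have "\<dots> = (\<Sum>l\<in>{0..<n}. (A * W) $$ (i,l) * A$$(j,l))"
    using AWc A i j by (auto simp: scalar_prod_def intro!: sum.cong)
  also have "\<dots> = (\<Sum>l\<in>{0..<n}. A$$(i,l) * W$$(l,l) * A$$(j,l))"
    by (rule sum.cong) (simp_all add: AW)
  finally show ?thesis .
qed

lemma det_expand:
  fixes A W :: "real mat"
  assumes A: "A \<in> carrier_mat k n" and W: "W \<in> carrier_mat n n" and dW: "diagonal_mat W"
  shows "det (A * W * transpose_mat A) = (\<Sum>f\<in>Pi\<^sub>E {0..<k} (\<lambda>_. {0..<n}).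
     (\<Prod>i\<in>{0..<k}. A$$(i,f i) * W$$(f i,f i)) *
     (\<Sum>p\<in>{p. p permutes {0..<k}}. signof p * (\<Prod>i\<in>{0..<k}. A$$(p i, f i))))"
proof -
  let ?P = "{p. p permutes {0..<k}}"
  let ?F = "Pi\<^sub>E {0..<k} (\<lambda>_. {0..<n})"
  let ?B = "A * W * transpose_mat A"
  have Bc: "?B \<in> carrier_mat k k" using A W by simp
  have pk: "p i < k" if "p \<in> ?P" "i \<in> {0..<k}" for p i
    using that permutes_in_image by fastforce
  have "det ?B = (\<Sum>p\<in>?P. signof p * (\<Prod>i\<in>{0..<k}. ?B $$ (i, p i)))"
    by (rule det_def'[OF Bc])
  also have "\<dots> = (\<Sum>p\<in>?P. signof p * (\<Prod>i\<in>{0..<k}. \<Sum>l\<in>{0..<n}. A$$(i,l) * W$$(l,l) * A$$(p i,l)))"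
    by (intro sum.cong refl arg_cong2[where f="(*)"] prod.cong) (use entry_AWAt[OF A W dW] pk in auto)
  also have "\<dots> = (\<Sum>p\<in>?P. signof p * (\<Sum>f\<in>?F. \<Prod>i\<in>{0..<k}. A$$(i,f i) * W$$(f i,f i) * A$$(p i,f i)))"
    by (intro sum.cong refl arg_cong2[where f="(*)"] prod_sum_PiE) auto
  also have "\<dots> = (\<Sum>p\<in>?P. \<Sum>f\<in>?F. (\<Prod>i\<in>{0..<k}. A$$(i,f i) * W$$(f i,f i)) * (signof p * (\<Prod>i\<in>{0..<k}. A$$(p i,f i))))"
    by (simp add: sum_distrib_left prod.distrib mult_ac)
  also have "\<dots> = (\<Sum>f\<in>?F. \<Sum>p\<in>?P. (\<Prod>i\<in>{0..<k}. A$$(i,f i) * W$$(f i,f i)) * (signof p * (\<Prod>i\<in>{0..<k}. A$$(p i,f i))))"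
    by (rule sum.swap)
  also have "\<dots> = (\<Sum>f\<in>?F. (\<Prod>i\<in>{0..<k}. A$$(i,f i) * W$$(f i,f i)) * (\<Sum>p\<in>?P. signof p * (\<Prod>i\<in>{0..<k}. A$$(p i,f i))))"
    by (simp add: sum_distrib_left)
  finally show ?thesis .
qed



lemma D_noninj:
  fixes A :: "real mat"
  assumes ni: "\<not> inj_on f {0..<k}"
  shows "(\<Sum>p\<in>{p. p permutes {0..<k}}. signof p * (\<Prod>i\<in>{0..<k}. A$$(p i, f i))) = 0"
proof -
  let ?M = "mat k k (\<lambda>(i,j). A$$(j, f i)) :: real mat"
  have Mc: "?M \<in> carrier_mat k k" by simp
  have pk: "p i < k" if "p permutes {0..<k}" "i < k" for p i
    using that permutes_in_image by fastforce
  have "det ?M = (\<Sum>p\<in>{p. p permutes {0..<k}}. signof p * (\<Prod>i\<in>{0..<k}. ?M $$ (i, p i)))"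
    by (rule det_def'[OF Mc])
  also have "\<dots> = (\<Sum>p\<in>{p. p permutes {0..<k}}. signof p * (\<Prod>i\<in>{0..<k}. A$$(p i, f i)))"
    by (intro sum.cong refl arg_cong2[where f="(*)"] prod.cong) (use pk in auto)
  finally have eq: "det ?M = \<dots>" .
  from ni obtain i j where ij: "i \<in> {0..<k}" "j \<in> {0..<k}" "f i = f j" "i \<noteq> j"
    unfolding inj_on_def by blast
  have rr: "row ?M i = row ?M j" using ij by (intro eq_vecI) auto
  have "det ?M = 0" using det_identical_rows[OF Mc ij(4) _ _ rr] ij by simp
  then show ?thesis using eq by simp
qed

lemma submatrix_eq:
  fixes A :: "real mat"
  assumes A: "A \<in> carrier_mat k n" and J: "J \<subseteq> {0..<n}" "card J = k"
  shows "submatrix A {0..<k} J = mat k k (\<lambda>(i,j). A$$(i, pick J j))"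
proof -
  have r: "{i. i < dim_row A \<and> i \<in> {0..<k}} = {0..<k}" using A by auto
  have c: "{j. j < dim_col A \<and> j \<in> J} = J" using A J by auto
  show ?thesis
  proof (rule eq_matI)
    show "dim_row (submatrix A {0..<k} J) = dim_row (mat k k (\<lambda>(i,j). A$$(i, pick J j)))"
      unfolding dim_submatrix r by simp
    show "dim_col (submatrix A {0..<k} J) = dim_col (mat k k (\<lambda>(i,j). A$$(i, pick J j)))"
      unfolding dim_submatrix c using J by simp
    fix i j assume i: "i < dim_row (mat k k (\<lambda>(i,j). A$$(i, pick J j)))"
      and j: "j < dim_col (mat k k (\<lambda>(i,j). A$$(i, pick J j)))"
    have "submatrix A {0..<k} J $$ (i,j) = A $$ (pick {0..<k} i, pick J j)"
      by (rule submatrix_index) (use i j r c J in auto)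
    then show "submatrix A {0..<k} J $$ (i, j) = mat k k (\<lambda>(i,j). A$$(i, pick J j)) $$ (i, j)"
      using i j pick_atLeast0 by simp
  qed
qed

lemma det_sub_expand:
  fixes A :: "real mat"
  assumes A: "A \<in> carrier_mat k n" and J: "J \<subseteq> {0..<n}" "card J = k"
  shows "det (submatrix A {0..<k} J) = (\<Sum>p\<in>{p. p permutes {0..<k}}. signof p * (\<Prod>i\<in>{0..<k}. A$$(i, pick J (p i))))"
proof -
  have pk: "p i < k" if "p permutes {0..<k}" "i < k" for p i
    using that permutes_in_image by fastforce
  show ?thesis unfolding submatrix_eq[OF assms]
    by (subst det_def'[of _ k]) (auto intro!: sum.cong prod.cong simp: pk)
qed

lemma D_phi:
  fixes A :: "real mat"
  assumes A: "A \<in> carrier_mat k n" and J: "J \<subseteq> {0..<n}" "card J = k"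
    and pi: "\<pi> permutes {0..<k}"
  shows "(\<Sum>p\<in>{p. p permutes {0..<k}}. signof p * (\<Prod>i\<in>{0..<k}. A$$(p i, phi k J \<pi> i)))
    = signof \<pi> * det (submatrix A {0..<k} J)"
proof -
  let ?T = "mat k k (\<lambda>(r,j). A$$(j, pick J r)) :: real mat"
  have Tc: "?T \<in> carrier_mat k k" by simp
  have pk: "p i < k" if "p permutes {0..<k}" "i < k" for p i
    using that permutes_in_image by fastforce
  let ?M = "mat k k (\<lambda>(i,j). ?T $$ (\<pi> i, j))"
  have Mc: "?M \<in> carrier_mat k k" by simp
  have "det ?M = (\<Sum>p\<in>{p. p permutes {0..<k}}. signof p * (\<Prod>i\<in>{0..<k}. ?M $$ (i, p i)))"
    by (rule det_def'[OF Mc])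
  also have "\<dots> = (\<Sum>p\<in>{p. p permutes {0..<k}}. signof p * (\<Prod>i\<in>{0..<k}. A$$(p i, phi k J \<pi> i)))"
    by (intro sum.cong refl arg_cong2[where f="(*)"] prod.cong) (use pk pi in \<open>auto simp: phi_def\<close>)
  finally have e1: "det ?M = \<dots>" .
  have e2: "det ?M = signof \<pi> * det ?T" by (rule det_permute_rows[OF Tc pi])
  have "transpose_mat ?T = submatrix A {0..<k} J"
    unfolding submatrix_eq[OF A J] by (rule eq_matI) auto
  then have "det ?T = det (submatrix A {0..<k} J)"
    using det_transpose[OF Tc] by simp
  then show ?thesis using e1 e2 by simp
qed



lemma CB:
  fixes A W :: "real mat"
  assumes A: "A \<in> carrier_mat k n" and W: "W \<in> carrier_mat n n" and dW: "diagonal_mat W"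
  shows "det (A * W * transpose_mat A) = (\<Sum>J\<in>{J. J \<subseteq> {0..<n} \<and> card J = k}.
     (\<Prod>i\<in>{0..<k}. W$$(pick J i, pick J i)) * det (submatrix A {0..<k} J)^2)"
proof -
  let ?P = "{p. p permutes {0..<k}}"
  let ?F = "Pi\<^sub>E {0..<k} (\<lambda>_. {0..<n})"
  let ?Fi = "{f\<in>Pi\<^sub>E {0..<k} (\<lambda>_. {0..<n}). inj_on f {0..<k}}"
  let ?S = "{J. J \<subseteq> {0..<n} \<and> card J = k}"
  define c where "c f = (\<Prod>i\<in>{0..<k}. A$$(i,f i) * W$$(f i,f i))" for f :: "nat \<Rightarrow> nat"
  define D where "D f = (\<Sum>p\<in>?P. signof p * (\<Prod>i\<in>{0..<k}. A$$(p i, f i)))" for f :: "nat \<Rightarrow> nat"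
  define w where "w l = W$$(l,l)" for l
  have "det (A * W * transpose_mat A) = (\<Sum>f\<in>?F. c f * D f)"
    unfolding c_def D_def by (rule det_expand[OF A W dW])
  also have "\<dots> = (\<Sum>f\<in>?Fi. c f * D f)"
  proof (rule sum.mono_neutral_right)
    show "finite ?F" by (simp add: finite_PiE)
    show "?Fi \<subseteq> ?F" by auto
    show "\<forall>f\<in>?F - ?Fi. c f * D f = 0" using D_noninj unfolding D_def by auto
  qed
  also have "\<dots> = (\<Sum>J\<in>?S. \<Sum>\<pi>\<in>?P. c (phi k J \<pi>) * D (phi k J \<pi>))"
    by (rule decomp)
  also have "\<dots> = (\<Sum>J\<in>?S. (\<Prod>i\<in>{0..<k}. w (pick J i)) * det (submatrix A {0..<k} J)^2)"
  proof (rule sum.cong[OF refl])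
    fix J assume "J \<in> ?S"
    then have J: "J \<subseteq> {0..<n}" "card J = k" by auto
    let ?d = "det (submatrix A {0..<k} J)"
    let ?PJ = "\<Prod>i\<in>{0..<k}. w (pick J i)"
    have "c (phi k J \<pi>) * D (phi k J \<pi>) =
      ?PJ * ?d * (signof \<pi> * (\<Prod>i\<in>{0..<k}. A$$(i, pick J (\<pi> i))))" if pi: "\<pi> \<in> ?P" for \<pi>
    proof -
      have p: "\<pi> permutes {0..<k}" using pi by simp
      have D1: "D (phi k J \<pi>) = signof \<pi> * ?d" unfolding D_def by (rule D_phi[OF A J p])
      have "c (phi k J \<pi>) = (\<Prod>i\<in>{0..<k}. A$$(i, pick J (\<pi> i)) * w (pick J (\<pi> i)))"
        unfolding c_def w_def phi_def by (rule prod.cong) auto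
      also have "\<dots> = (\<Prod>i\<in>{0..<k}. A$$(i, pick J (\<pi> i))) * (\<Prod>i\<in>{0..<k}. w (pick J (\<pi> i)))"
        by (rule prod.distrib)
      also have "(\<Prod>i\<in>{0..<k}. w (pick J (\<pi> i))) = ?PJ"
        using prod.permute[OF p, of "\<lambda>i. w (pick J i)"] by (simp add: comp_def)
      finally show ?thesis using D1 by (simp add: mult_ac)
    qed
    then have "(\<Sum>\<pi>\<in>?P. c (phi k J \<pi>) * D (phi k J \<pi>)) =
        (\<Sum>\<pi>\<in>?P. ?PJ * ?d * (signof \<pi> * (\<Prod>i\<in>{0..<k}. A$$(i, pick J (\<pi> i)))))"
      by (rule sum.cong[OF refl])
    also have "\<dots> = ?PJ * ?d * ?d"
      unfolding det_sub_expand[OF A J, symmetric] sum_distrib_left[symmetric] ..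
    finally show "(\<Sum>\<pi>\<in>?P. c (phi k J \<pi>) * D (phi k J \<pi>)) = ?PJ * ?d^2"
      by (simp add: power2_eq_square mult_ac)
  qed
  finally show ?thesis unfolding w_def .
qed

lemma wsum:
  fixes w :: "nat \<Rightarrow> real"
  assumes nn: "\<And>l. l < n \<Longrightarrow> w l \<ge> 0" and s: "(\<Sum>l\<in>{0..<n}. w l) = 1"
  shows "fact k * (\<Sum>J\<in>{J. J \<subseteq> {0..<n} \<and> card J = k}. \<Prod>i\<in>{0..<k}. w (pick J i)) \<le> 1"
proof -
  let ?P = "{p. p permutes {0..<k}}"
  let ?F = "Pi\<^sub>E {0..<k} (\<lambda>_. {0..<n})"
  let ?Fi = "{f\<in>Pi\<^sub>E {0..<k} (\<lambda>_. {0..<n}). inj_on f {0..<k}}"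
  let ?S = "{J. J \<subseteq> {0..<n} \<and> card J = k}"
  have cP: "card ?P = fact k" by (rule card_permutations) auto
  have "fact k * (\<Sum>J\<in>?S. \<Prod>i\<in>{0..<k}. w (pick J i)) = (\<Sum>J\<in>?S. \<Sum>\<pi>\<in>?P. \<Prod>i\<in>{0..<k}. w (pick J i))"
    by (simp add: sum_distrib_left cP)
  also have "\<dots> = (\<Sum>J\<in>?S. \<Sum>\<pi>\<in>?P. \<Prod>i\<in>{0..<k}. w (phi k J \<pi> i))"
  proof (intro sum.cong refl)
    fix J \<pi> assume "\<pi> \<in> ?P"
    then have p: "\<pi> permutes {0..<k}" by simp
    have "(\<Prod>i\<in>{0..<k}. w (phi k J \<pi> i)) = (\<Prod>i\<in>{0..<k}. w (pick J (\<pi> i)))"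
      unfolding phi_def by (rule prod.cong) auto
    also have "\<dots> = (\<Prod>i\<in>{0..<k}. w (pick J i))"
      using prod.permute[OF p, of "\<lambda>i. w (pick J i)"] by (simp add: comp_def)
    finally show "(\<Prod>i\<in>{0..<k}. w (pick J i)) = (\<Prod>i\<in>{0..<k}. w (phi k J \<pi> i))" by simp
  qed
  also have "\<dots> = (\<Sum>f\<in>?Fi. \<Prod>i\<in>{0..<k}. w (f i))"
    by (rule decomp[symmetric])
  also have "\<dots> \<le> (\<Sum>f\<in>?F. \<Prod>i\<in>{0..<k}. w (f i))"
  proof (rule sum_mono2)
    show "finite ?F" by (simp add: finite_PiE)
    show "?Fi \<subseteq> ?F" by auto
    show "\<And>f. f \<in> ?F - ?Fi \<Longrightarrow> 0 \<le> (\<Prod>i\<in>{0..<k}. w (f i))"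
      by (rule prod_nonneg) (use nn in \<open>auto simp: PiE_def Pi_def\<close>)
  qed
  also have "\<dots> = (\<Prod>i\<in>{0..<k}. \<Sum>l\<in>{0..<n}. w l)"
    by (rule prod_sum_PiE[symmetric]) auto
  also have "\<dots> = 1" using s by simp
  finally show ?thesis .
qed



lemma fact_ge: "(real k / exp 1)^k \<le> fact k"
proof -
  have sm: "summable (\<lambda>m. real k ^ m /\<^sub>R fact m)" by (rule summable_exp_generic)
  have "(\<Sum>m\<in>{k}. real k ^ m /\<^sub>R fact m) \<le> (\<Sum>m. real k ^ m /\<^sub>R fact m)"
    by (rule sum_le_suminf[OF sm]) auto
  then have "real k ^ k / fact k \<le> exp (real k)" by (simp add: exp_def divide_inverse mult.commute)
  then have "real k ^ k \<le> fact k * exp (real k)" by (simp add: divide_le_eq mult.commute)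
  moreover have "exp (real k) = exp 1 ^ k" by (simp add: exp_of_nat_mult[symmetric])
  ultimately show ?thesis by (simp add: power_divide divide_le_eq)
qed

lemma abs_powr_sq: "\<bar>d::real\<bar> powr (1 / real k) = (d^2) powr (1 / (2 * real k))"
proof (cases "d = 0")
  case True then show ?thesis by simp
next
  case False
  have e: "d^2 = \<bar>d\<bar> powr 2" using False by (simp add: powr_realpow[symmetric])
  have e2: "2 * (1 / (2 * real k)) = 1 / real k" by simp
  show ?thesis unfolding e powr_powr e2 ..
qed

lemma rhs_eq:
  assumes q: "q > 0" and b: "b \<ge> (0::real)" and k: "k \<ge> 1"
  shows "sqrt q * b powr (1 / (2 * real k)) = (q^k * b) powr (1 / (2 * real k))"
proof -
  have "(q^k) powr (1 / (2 * real k)) = (q powr real k) powr (1 / (2 * real k))"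
    using q by (simp add: powr_realpow)
  also have "\<dots> = q powr (1/2)" using k by (simp add: powr_powr)
  also have "\<dots> = sqrt q" using q by (simp add: powr_half_sqrt)
  finally have "(q^k) powr (1 / (2 * real k)) = sqrt q" .
  then show ?thesis using q b by (simp add: powr_mult)
qed



theorem lemma3p2:
  fixes A W :: "real mat" and k n :: nat
  assumes "1 \<le> k" and "k \<le> n"
    and "A \<in> carrier_mat k n"
    and "W \<in> carrier_mat n n"
    and "diagonal_mat W"
    and "\<forall>i<n. W $$ (i, i) \<ge> 0"
    and "(\<Sum>i<n. W $$ (i, i)) = 1"
  shows "\<exists>J. J \<subseteq> {0..<n} \<and> card J = k \<and>
           \<bar>det (submatrix A {0..<k} J)\<bar> powr (1 / real k)
             \<ge> sqrt (real k / exp 1) *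
               \<bar>det (A * W * transpose_mat A)\<bar> powr (1 / (2 * real k))"
proof -
  note k1 = assms(1) and kn = assms(2) and A = assms(3) and W = assms(4) and dW = assms(5)
  define w where "w l = W$$(l,l)" for l
  have nn: "\<And>l. l < n \<Longrightarrow> w l \<ge> 0" using assms(6) by (simp add: w_def)
  have s: "(\<Sum>l\<in>{0..<n}. w l) = 1" using assms(7) by (simp add: w_def atLeast0LessThan)
  let ?S = "{J. J \<subseteq> {0..<n} \<and> card J = k}"
  define d where "d J = det (submatrix A {0..<k} J)" for J
  define P where "P J = (\<Prod>i\<in>{0..<k}. w (pick J i))" for J
  let ?b = "det (A * W * transpose_mat A)"
  have finS: "finite ?S" by (rule finite_subset[of _ "Pow {0..<n}"]) auto
  have neS: "?S \<noteq> {}" using kn by (intro ex_in_conv[THEN iffD1] exI[of _ "{0..<k}"]) auto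
  have Pnn: "P J \<ge> 0" if "J \<in> ?S" for J
  proof -
    have fJ: "finite J" using that finite_subset by auto
    have cJ: "card J = k" using that by simp
    show ?thesis unfolding P_def
    proof (rule prod_nonneg)
      fix i assume "i \<in> {0..<k}"
      then have "pick J i \<in> J" using pick_facts(1)[OF fJ cJ] by simp
      then have "pick J i < n" using that by auto
      then show "0 \<le> w (pick J i)" by (rule nn)
    qed
  qed
  have b: "?b = (\<Sum>J\<in>?S. P J * d J^2)"
    unfolding CB[OF A W dW] P_def d_def w_def ..
  define M where "M = Max ((\<lambda>J. d J^2) ` ?S)"
  have "M \<in> (\<lambda>J. d J^2) ` ?S" unfolding M_def by (rule Max_in) (use finS neS in auto)
  then obtain J0 where J0: "J0 \<in> ?S" "M = d J0^2" by auto
  have Mge: "d J^2 \<le> M" if "J \<in> ?S" for J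
    unfolding M_def by (rule Max_ge) (use finS that in auto)
  have b0: "?b \<ge> 0" unfolding b by (rule sum_nonneg) (use Pnn in auto)
  have "?b \<le> (\<Sum>J\<in>?S. P J * M)" unfolding b
    by (rule sum_mono) (use Pnn Mge in \<open>auto intro: mult_left_mono\<close>)
  also have "\<dots> = M * (\<Sum>J\<in>?S. P J)" by (simp add: sum_distrib_left mult_ac)
  finally have b1: "?b \<le> M * (\<Sum>J\<in>?S. P J)" .
  have w1: "fact k * (\<Sum>J\<in>?S. P J) \<le> 1" unfolding P_def by (rule wsum[OF nn s])
  have M0: "M \<ge> 0" using J0 by simp
  have "fact k * ?b \<le> fact k * (M * (\<Sum>J\<in>?S. P J))"
    by (rule mult_left_mono[OF b1]) simp
  also have "\<dots> = M * (fact k * (\<Sum>J\<in>?S. P J))" by (simp only: mult_ac)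
  also have "\<dots> \<le> M * 1" by (rule mult_left_mono[OF w1 M0])
  finally have fb: "fact k * ?b \<le> d J0^2" using J0 by simp
  define q where "q = real k / exp 1"
  have q0: "q > 0" using k1 by (simp add: q_def)
  have "q^k * ?b \<le> fact k * ?b" using fact_ge[of k] b0 by (simp add: q_def mult_right_mono)
  with fb have key: "q^k * ?b \<le> d J0^2" by simp
  have "sqrt q * \<bar>?b\<bar> powr (1 / (2 * real k)) = (q^k * ?b) powr (1 / (2 * real k))"
    using rhs_eq[OF q0 b0 k1] b0 by simp
  also have "\<dots> \<le> (d J0^2) powr (1 / (2 * real k))"
    by (rule powr_mono2) (use key q0 b0 in auto)
  also have "\<dots> = \<bar>d J0\<bar> powr (1 / real k)" by (rule abs_powr_sq[symmetric])
  finally show ?thesis using J0 unfolding d_def q_def by auto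
qed


end
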